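(* Let $S,T\in\mathbb P$ with $\deg(S)=n$, $\deg(T)=m$, and let $0\le k\le n-m$. Then $$\sum_{U\in\mathbb P,\ \deg(U)=m+k}(S/U)(U/T)=(S/T)\binom{n-m}{k}.$$ Consequently, for all $a,b\in\mathbb C$, $$\sum_{U\in\mathbb P}(S/U)(U/T)\,a^{\,n-\deg(U)}(b-a)^{\deg(U)-m}=(S/T)\,b^{\,n-m}.$$
   Context: Let $\mathbb P$ denote the set of finite planar reduced rooted trees (rooted trees in which the children of each vertex are linearly ordered and no vertex has exactly one child), including the empty tree $\mathbf 1$ and the one-vertex tree $|$. For $T\in\mathbb P$, $\deg(T)$ is the number of leaves and $L(T)$ its set of leaves. For $S\in\mathbb P$ and $I\subseteq L(S)$, the contraction $S|I\in\mathbb P$ is obtained from the subtree of $S$ consisting of all vertices on paths from the root to leaves in $I$ (with induced planar order) by suppressing every vertex having exactly one child ($S|\emptyset=\mathbf 1$, $S|I=|$ if $\#I=1$). The planar binomial coefficient is $(S/T)=\#\{I\subseteq L(S):S|I=T\}$ (zero unless $\deg T\le\deg S$). *)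

theory Defs
  imports Complex_Main
begin

text \<open>Planar rooted trees: a vertex is the ordered list of its children.  Leaves are numbered 0,1,... from
  left to right.  The empty tree is represented by None, every nonempty tree
  t by Some t.\<close>

datatype ptree = Nd "ptree list"

fun reduced :: "ptree \<Rightarrow> bool" where
  "reduced (Nd ts) = (length ts \<noteq> 1 \<and> (\<forall>t\<in>set ts. reduced t))"

fun leaves :: "ptree \<Rightarrow> nat" where
  "leaves (Nd ts) = (if ts = [] then 1 else sum_list (map leaves ts))"

definition PP :: "ptree option set" where
  "PP = {None} \<union> Some ` {t. reduced t}"

definition deg :: "ptree option \<Rightarrow> nat" where
  "deg U = (case U of None \<Rightarrow> 0 | Some t \<Rightarrow> leaves t)"

text \<open>Contraction to a set I of leaf indices: keep the vertices lying on paths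
  from the root to leaves in I and suppress vertices with exactly one child.
  The result None means the empty tree.\<close>
fun contr :: "ptree \<Rightarrow> nat set \<Rightarrow> ptree option"
and contrs :: "ptree list \<Rightarrow> nat set \<Rightarrow> ptree list" where
  "contr (Nd ts) I =
     (if ts = [] then (if 0 \<in> I then Some (Nd []) else None)
      else (case contrs ts I of [] \<Rightarrow> None | [c] \<Rightarrow> Some c | cs \<Rightarrow> Some (Nd cs)))"
| "contrs [] I = []"
| "contrs (t # ts) I =
     (case contr t I of None \<Rightarrow> [] | Some c \<Rightarrow> [c]) @ contrs ts {i. i + leaves t \<in> I}"

definition contract :: "ptree option \<Rightarrow> nat set \<Rightarrow> ptree option" where
  "contract S I = (case S of None \<Rightarrow> None | Some t \<Rightarrow> contr t I)"

definition pbinom :: "ptree option \<Rightarrow> ptree option \<Rightarrow> nat" where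
  "pbinom S T = card {I. I \<subseteq> {..<deg S} \<and> contract S I = T}"

end

theory Submission
  imports Defs
begin

definition shift :: "nat set \<Rightarrow> nat \<Rightarrow> nat set" where
  "shift I a = {i. i + a \<in> I}"
definition rank :: "nat set \<Rightarrow> nat \<Rightarrow> nat" where
  "rank I x = card {y\<in>I. y < x}"
definition sel :: "nat set \<Rightarrow> nat set \<Rightarrow> nat set" where
  "sel I J = {x\<in>I. rank I x \<in> J}"
definition opt :: "ptree option \<Rightarrow> ptree list" where
  "opt x = (case x of None \<Rightarrow> [] | Some c \<Rightarrow> [c])"
fun wrap :: "ptree list \<Rightarrow> ptree option" where
  "wrap [] = None" | "wrap [c] = Some c" | "wrap cs = Some (Nd cs)"

lemma contr_Nd: "ts \<noteq> [] \<Longrightarrow> contr (Nd ts) I = wrap (contrs ts I)"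
  by (cases "contrs ts I" rule: wrap.cases) auto

lemma contrs_Cons': "contrs (t#ts) I = opt (contr t I) @ contrs ts (shift I (leaves t))"
  by (simp add: shift_def opt_def split: option.split)

lemma contrs_opt: "contrs (opt x) J = opt (contract x J)"
  by (cases x) (auto simp: opt_def contract_def shift_def split: option.split)

lemma contract_wrap: "contract (wrap cs) J = wrap (contrs cs J)"
proof (cases cs rule: wrap.cases)
  case (2 c)
  then show ?thesis by (cases "contr c J") (auto simp: contract_def)
qed (auto simp: contract_def contr_Nd simp del: contr.simps)

lemma shift_shift: "shift (shift J a) b = shift J (a + b)"
  by (auto simp: shift_def ac_simps)

lemma contrs_append:
  "contrs (xs @ ys) J = contrs xs J @ contrs ys (shift J (sum_list (map leaves xs)))"
proof (induction xs arbitrary: J)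
  case Nil then show ?case by (simp add: shift_def)
next
  case (Cons x xs) then show ?case
    by (simp add: contrs_Cons' shift_shift del: contrs.simps)
qed

lemma deg_wrap: "deg (wrap cs) = sum_list (map leaves cs)"
  by (cases cs rule: wrap.cases) (auto simp: deg_def)

lemma sum_leaves_opt: "sum_list (map leaves (opt x)) = deg x"
  by (cases x) (auto simp: opt_def deg_def)

lemma card_split:
  fixes I :: "nat set"
  shows "card {i\<in>I. i < a + s} = card {i\<in>I. i < a} + card {i. i + a \<in> I \<and> i < s}"
proof -
  have e: "{i\<in>I. i < a + s} = {i\<in>I. i < a} \<union> (\<lambda>i. i + a) ` {i. i + a \<in> I \<and> i < s}"
  proof (intro equalityI subsetI)
    fix i assume i: "i \<in> {i\<in>I. i < a + s}"
    show "i \<in> {i\<in>I. i < a} \<union> (\<lambda>i. i + a) ` {i. i + a \<in> I \<and> i < s}"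
    proof (cases "i < a")
      case False
      then have "i = (i - a) + a" "i - a < s" using i by auto
      then show ?thesis using i by (metis (mono_tags, lifting) UnI2 image_eqI mem_Collect_eq)
    qed (use i in auto)
  qed auto
  have f1: "finite {i. i + a \<in> I \<and> i < s}" by (rule finite_subset[of _ "{..<s}"]) auto
  have "card {i\<in>I. i < a + s} = card {i\<in>I. i < a} + card ((\<lambda>i. i + a) ` {i. i + a \<in> I \<and> i < s})"
    unfolding e by (rule card_Un_disjoint) (auto intro: f1)
  also have "card ((\<lambda>i. i + a) ` {i. i + a \<in> I \<and> i < s}) = card {i. i + a \<in> I \<and> i < s}"
    by (rule card_image) (auto simp: inj_on_def)
  finally show ?thesis .
qed

lemma deg_contr:
  "deg (contr t I) = card {i\<in>I. i < leaves t}"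
  "sum_list (map leaves (contrs ts I)) = card {i\<in>I. i < sum_list (map leaves ts)}"
proof (induction t I and ts I rule: contr_contrs.induct)
  case (1 ts I)
  show ?case
  proof (cases "ts = []")
    case True
    have "{i \<in> I. i < Suc 0} = (if 0 \<in> I then {0} else {})" by auto
    then show ?thesis using True by (simp add: deg_def)
  next
    case False
    then show ?thesis using 1 by (simp add: contr_Nd deg_wrap del: contr.simps)
  qed
next
  case (2 I) then show ?case by simp
next
  case (3 t ts I)
  show ?case
    using 3 by (simp add: contrs_Cons' sum_leaves_opt card_split shift_def del: contrs.simps)
qed

lemma shift_sel: "shift (sel I J) a = sel (shift I a) (shift J (card {i\<in>I. i < a}))"
proof -
  have r: "rank I (x + a) = rank (shift I a) x + card {i\<in>I. i < a}" for x
  proof -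
    have "{y \<in> shift I a. y < x} = {i. i + a \<in> I \<and> i < x}" by (auto simp: shift_def)
    then show ?thesis using card_split[of I a x] by (simp add: rank_def add.commute)
  qed
  show ?thesis by (auto simp: shift_def sel_def r)
qed

lemma contr_comp:
  "\<forall>J. contract (contr t I) J = contr t (sel I J)"
  "\<forall>J. contrs (contrs ts I) J = contrs ts (sel I J)"
proof (induction t I and ts I rule: contr_contrs.induct)
  case (1 ts I)
  show ?case
  proof (cases "ts = []")
    case True
    have "0 \<in> sel I J \<longleftrightarrow> 0 \<in> I \<and> 0 \<in> J" for J by (simp add: sel_def rank_def)
    then show ?thesis using True by (simp add: contract_def)
  next
    case False
    then show ?thesis using 1 by (simp add: contr_Nd contract_wrap del: contr.simps)
  qed
next
  case (2 I) then show ?case by simp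
next
  case (3 t ts I)
  show ?case
    using 3[folded shift_def] by (simp add: contrs_Cons' contrs_append contrs_opt sum_leaves_opt deg_contr shift_sel del: contrs.simps)
qed

lemma reduced_contr:
  "(case contr t I of None \<Rightarrow> True | Some c \<Rightarrow> reduced c)"
  "\<forall>c\<in>set (contrs ts I). reduced c"
proof (induction t I and ts I rule: contr_contrs.induct)
  case (1 ts I)
  show ?case
  proof (cases "ts = []")
    case True then show ?thesis by simp
  next
    case False
    then show ?thesis using 1 by (cases "contrs ts I" rule: wrap.cases) (auto simp: contr_Nd simp del: contr.simps)
  qed
next
  case (2 I) then show ?case by simp
next
  case (3 t ts I)
  then show ?case using 3[folded shift_def] by (auto simp: contrs_Cons' opt_def split: option.splits simp del: contrs.simps)
qed

lemma contract_PP: "contract S I \<in> PP"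
proof (cases S)
  case (Some a)
  then show ?thesis using reduced_contr(1)[of a I]
    by (auto simp: contract_def PP_def split: option.splits)
qed (simp add: contract_def PP_def)

lemma deg_None[simp]: "deg None = 0" and deg_Some[simp]: "deg (Some t) = leaves t"
  by (simp_all add: deg_def)

lemma deg_contract: "deg (contract S I) = card {i\<in>I. i < deg S}"
  by (cases S) (auto simp: contract_def deg_contr)

lemma contract_comp: "contract (contract S I) J = contract S (sel I J)"
  by (cases S) (auto simp: contract_def contr_comp(1)[rule_format, symmetric])


lemma rank_less: "finite I \<Longrightarrow> x \<in> I \<Longrightarrow> rank I x < card I"
  unfolding rank_def by (rule psubset_card_mono) auto

lemma rank_mono: "finite I \<Longrightarrow> x \<in> I \<Longrightarrow> y \<in> I \<Longrightarrow> x < y \<Longrightarrow> rank I x < rank I y"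
  unfolding rank_def
proof (rule psubset_card_mono)
  assume "finite I" "x \<in> I" "y \<in> I" "x < y"
  then show "finite {z \<in> I. z < y}" by simp
  show "{z \<in> I. z < x} \<subset> {z \<in> I. z < y}" using \<open>x \<in> I\<close> \<open>x < y\<close> by auto
qed

lemma rank_inj: "finite I \<Longrightarrow> inj_on (rank I) I"
  unfolding inj_on_def
  by (metis linorder_neq_iff less_irrefl rank_mono)

lemma rank_bij: "finite I \<Longrightarrow> bij_betw (rank I) I {..<card I}"
proof -
  assume f: "finite I"
  have "rank I ` I = {..<card I}"
  proof (rule card_subset_eq)
    show "rank I ` I \<subseteq> {..<card I}" using rank_less[OF f] by auto
    show "card (rank I ` I) = card {..<card I}" using card_image[OF rank_inj[OF f]] by simp
  qed simp
  then show ?thesis using rank_inj[OF f] by (simp add: bij_betw_def)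
qed

lemma rank_sel: "finite I \<Longrightarrow> J \<subseteq> {..<card I} \<Longrightarrow> rank I ` sel I J = J"
  using rank_bij[of I] unfolding sel_def bij_betw_def by auto

lemma sel_rank: "finite I \<Longrightarrow> K \<subseteq> I \<Longrightarrow> sel I (rank I ` K) = K"
  using rank_inj[of I] unfolding sel_def inj_on_def by auto

lemma card_sel_eq:
  assumes f: "finite I"
  shows "card {J. J \<subseteq> {..<card I} \<and> P (sel I J)} = card {K. K \<subseteq> I \<and> P K}"
proof -
  have "inj_on (sel I) {J. J \<subseteq> {..<card I} \<and> P (sel I J)}"
    by (rule inj_onI) (metis (no_types, lifting) f mem_Collect_eq rank_sel)
  moreover have "sel I ` {J. J \<subseteq> {..<card I} \<and> P (sel I J)} = {K. K \<subseteq> I \<and> P K}"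
  proof
    show "sel I ` {J. J \<subseteq> {..<card I} \<and> P (sel I J)} \<subseteq> {K. K \<subseteq> I \<and> P K}"
      by (auto simp: sel_def)
    show "{K. K \<subseteq> I \<and> P K} \<subseteq> sel I ` {J. J \<subseteq> {..<card I} \<and> P (sel I J)}"
    proof
      fix K assume K: "K \<in> {K. K \<subseteq> I \<and> P K}"
      then have "rank I ` K \<subseteq> {..<card I}" using rank_less[OF f] by auto
      then show "K \<in> sel I ` {J. J \<subseteq> {..<card I} \<and> P (sel I J)}"
        using K sel_rank[OF f, of K] by (intro image_eqI[of _ _ "rank I ` K"]) auto
    qed
  qed
  ultimately show ?thesis using card_image by fastforce
qed

lemma leaves_pos: "1 \<le> leaves t"
proof (induction t)
  case (Nd ts)
  show ?case
  proof (cases ts)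
    case (Cons x xs)
    then have "1 \<le> leaves x" using Nd by simp
    then show ?thesis using Cons by simp
  qed simp
qed

lemma length_le_sum: "(\<forall>x\<in>set ts. 1 \<le> f x) \<Longrightarrow> length ts \<le> sum_list (map f ts)"
  by (induction ts) auto

lemma child_less:
  assumes "x \<in> set ts" "length ts \<noteq> 1" shows "leaves x < sum_list (map leaves ts)"
proof -
  have "remove1 x ts \<noteq> []" using assms by (cases ts) auto
  then obtain y ys where "remove1 x ts = y # ys" by (cases "remove1 x ts") auto
  then have "1 \<le> sum_list (map leaves (remove1 x ts))" using leaves_pos[of y] by simp
  then show ?thesis using sum_list_map_remove1[OF assms(1), of leaves] by simp
qed

lemma finite_red: "finite {t. reduced t \<and> leaves t \<le> j}"
proof (induction j)
  case 0
  have "leaves t \<noteq> 0" for t using leaves_pos[of t] by simp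
  then have "{t. reduced t \<and> leaves t \<le> 0} = {}" by auto
  then show ?case by (metis finite.emptyI)
next
  case (Suc j)
  let ?F = "{t. reduced t \<and> leaves t \<le> j}"
  have "{t. reduced t \<and> leaves t \<le> Suc j} \<subseteq> {Nd []} \<union> Nd ` {ts. set ts \<subseteq> ?F \<and> length ts \<le> Suc j}"
  proof
    fix t assume t: "t \<in> {t. reduced t \<and> leaves t \<le> Suc j}"
    obtain ts where ts: "t = Nd ts" by (cases t)
    show "t \<in> {Nd []} \<union> Nd ` {ts. set ts \<subseteq> ?F \<and> length ts \<le> Suc j}"
    proof (cases "ts = []")
      case False
      then have s: "sum_list (map leaves ts) \<le> Suc j" "length ts \<noteq> 1" "\<forall>x\<in>set ts. reduced x"
        using t ts by auto
      have "set ts \<subseteq> ?F"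
      proof
        fix x assume x: "x \<in> set ts"
        have "leaves x < sum_list (map leaves ts)" by (rule child_less[OF x s(2)])
        then show "x \<in> ?F" using s x by simp
      qed
      moreover have "length ts \<le> sum_list (map leaves ts)"
        by (rule length_le_sum) (use leaves_pos in blast)
      ultimately show ?thesis using ts s(1) by auto
    qed (simp add: ts)
  qed
  moreover have "finite ({Nd []} \<union> Nd ` {ts. set ts \<subseteq> ?F \<and> length ts \<le> Suc j})"
    using finite_lists_length_le[OF Suc.IH] by simp
  ultimately show ?case by (rule finite_subset)
qed

lemma finite_PP_le: "finite {U\<in>PP. deg U \<le> j}"
proof -
  have "{U\<in>PP. deg U \<le> j} \<subseteq> {None} \<union> Some ` {t. reduced t \<and> leaves t \<le> j}"
    by (auto simp: PP_def)
  then show ?thesis using finite_red[of j] finite_subset by blast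
qed

lemma finite_PP_eq: "finite {U\<in>PP. deg U = j}"
  by (rule finite_subset[OF _ finite_PP_le[of j]]) auto


lemma finite_Pow_lessThan: "finite {I. I \<subseteq> {..<n::nat} \<and> Q I}"
  by (rule finite_subset[of _ "Pow {..<n}"]) auto

lemma card_supsets:
  assumes K: "K \<subseteq> {..<n::nat}" "card K = m"
  shows "card {I. (I \<subseteq> {..<n} \<and> card I = m + k) \<and> K \<subseteq> I} = (n - m choose k)"
proof -
  have fK: "finite K" using K finite_subset by blast
  have "{I. (I \<subseteq> {..<n} \<and> card I = m + k) \<and> K \<subseteq> I} = (\<lambda>D. D \<union> K) ` {D. D \<subseteq> {..<n} - K \<and> card D = k}"
  proof
    show "(\<lambda>D. D \<union> K) ` {D. D \<subseteq> {..<n} - K \<and> card D = k} \<subseteq> {I. (I \<subseteq> {..<n} \<and> card I = m + k) \<and> K \<subseteq> I}"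
    proof (rule image_subsetI)
      fix D assume "D \<in> {D. D \<subseteq> {..<n} - K \<and> card D = k}"
      then have D: "D \<subseteq> {..<n} - K" "card D = k" by auto
      have "finite D" using D finite_subset by blast
      then have "card (D \<union> K) = k + m" using card_Un_disjoint[of D K] fK D K by auto
      then show "D \<union> K \<in> {I. (I \<subseteq> {..<n} \<and> card I = m + k) \<and> K \<subseteq> I}" using D K by auto
    qed
    show "{I. (I \<subseteq> {..<n} \<and> card I = m + k) \<and> K \<subseteq> I} \<subseteq> (\<lambda>D. D \<union> K) ` {D. D \<subseteq> {..<n} - K \<and> card D = k}"
    proof
      fix I assume "I \<in> {I. (I \<subseteq> {..<n} \<and> card I = m + k) \<and> K \<subseteq> I}"
      then have I: "I \<subseteq> {..<n}" "card I = m + k" "K \<subseteq> I" by auto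
      have "finite I" using I finite_subset by blast
      then have "card (I - K) = k" using I K card_Diff_subset[OF fK I(3)] by simp
      then show "I \<in> (\<lambda>D. D \<union> K) ` {D. D \<subseteq> {..<n} - K \<and> card D = k}"
        using I by (intro image_eqI[of _ _ "I - K"]) auto
    qed
  qed
  moreover have "inj_on (\<lambda>D. D \<union> K) {D. D \<subseteq> {..<n} - K \<and> card D = k}"
    by (rule inj_onI) blast
  ultimately have "card {I. (I \<subseteq> {..<n} \<and> card I = m + k) \<and> K \<subseteq> I} = card {D. D \<subseteq> {..<n} - K \<and> card D = k}"
    by (simp add: card_image)
  also have "\<dots> = card ({..<n} - K) choose k" by (rule n_subsets) simp
  also have "card ({..<n} - K) = n - m" using K card_Diff_subset[OF fK K(1)] by simp
  finally show ?thesis .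
qed

lemma part1:
  fixes S T :: "ptree option"
  shows "(\<Sum>U\<in>{U\<in>PP. deg U = deg T + k}. pbinom S U * pbinom U T)
             = pbinom S T * (deg S - deg T choose k)"
proof -
  define n where "n = deg S"
  define m where "m = deg T"
  define B where "B = {I. I \<subseteq> {..<n} \<and> card I = m + k}"
  define C where "C = {K. K \<subseteq> {..<n} \<and> contract S K = T}"
  define X where "X = {U\<in>PP. deg U = m + k}"
  have fB: "finite B" unfolding B_def by (rule finite_Pow_lessThan)
  have fC: "finite C" unfolding C_def by (rule finite_Pow_lessThan)
  have fX: "finite X" unfolding X_def by (rule finite_PP_eq)
  have dc: "I \<subseteq> {..<n} \<Longrightarrow> deg (contract S I) = card I" for I
    unfolding deg_contract n_def[symmetric] by (metis (no_types, lifting) Collect_cong lessThan_iff Collect_mem_eq subsetD)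
  have fin: "I \<subseteq> {..<n} \<Longrightarrow> finite I" for I using finite_subset by blast
  have a: "pbinom S U = card {I\<in>B. contract S I = U}" if "U \<in> X" for U
  proof -
    have "{I. I \<subseteq> {..<deg S} \<and> contract S I = U} = {I\<in>B. contract S I = U}"
      using that dc unfolding B_def X_def n_def by auto
    then show ?thesis unfolding pbinom_def by simp
  qed
  have "(\<Sum>U\<in>X. pbinom S U * pbinom U T) = (\<Sum>U\<in>X. \<Sum>I\<in>{I\<in>B. contract S I = U}. pbinom (contract S I) T)"
    by (rule sum.cong) (simp_all add: a)
  also have "\<dots> = (\<Sum>I\<in>B. pbinom (contract S I) T)"
    by (rule sum.group[OF fB fX]) (auto simp: X_def B_def contract_PP dc)
  also have "\<dots> = (\<Sum>I\<in>B. card {K. K \<subseteq> I \<and> contract S K = T})"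
  proof (rule sum.cong)
    fix I assume I: "I \<in> B"
    have "pbinom (contract S I) T = card {J. J \<subseteq> {..<card I} \<and> contract S (sel I J) = T}"
      unfolding pbinom_def using I dc by (simp add: B_def contract_comp)
    also have "\<dots> = card {K. K \<subseteq> I \<and> contract S K = T}"
      by (rule card_sel_eq) (use I fin in \<open>auto simp: B_def\<close>)
    finally show "pbinom (contract S I) T = card {K. K \<subseteq> I \<and> contract S K = T}" .
  qed simp
  also have "\<dots> = (\<Sum>I\<in>B. \<Sum>K\<in>C. if K \<subseteq> I then 1 else 0)"
  proof (rule sum.cong)
    fix I assume I: "I \<in> B"
    have "{K. K \<subseteq> I \<and> contract S K = T} = {K\<in>C. K \<subseteq> I}" using I by (auto simp: B_def C_def)
    then show "card {K. K \<subseteq> I \<and> contract S K = T} = (\<Sum>K\<in>C. if K \<subseteq> I then 1 else 0)"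
      using sum.inter_filter[OF fC, of "\<lambda>_. 1::nat" "\<lambda>K. K \<subseteq> I"] by simp
  qed simp
  also have "\<dots> = (\<Sum>K\<in>C. \<Sum>I\<in>B. if K \<subseteq> I then 1 else 0)" by (rule sum.swap)
  also have "\<dots> = (\<Sum>K\<in>C. (n - m choose k))"
  proof (rule sum.cong)
    fix K assume K: "K \<in> C"
    then have "card K = m" using dc unfolding C_def m_def by auto
    then have "card {I\<in>B. K \<subseteq> I} = (n - m choose k)"
      using card_supsets[of K n m k] K unfolding B_def C_def by simp
    then show "(\<Sum>I\<in>B. if K \<subseteq> I then 1 else 0) = (n - m choose k)"
      using sum.inter_filter[OF fB, of "\<lambda>_. 1::nat" "\<lambda>I. K \<subseteq> I"] by simp
  qed simp
  also have "\<dots> = pbinom S T * (n - m choose k)"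
    by (simp add: pbinom_def C_def n_def)
  finally show ?thesis unfolding X_def n_def m_def .
qed


lemma pbinom_zero: "deg U < deg T \<Longrightarrow> pbinom U T = 0"
proof -
  assume l: "deg U < deg T"
  have "{J. J \<subseteq> {..<deg U} \<and> contract U J = T} = {}"
  proof (rule ccontr)
    assume "{J. J \<subseteq> {..<deg U} \<and> contract U J = T} \<noteq> {}"
    then obtain J where J: "J \<subseteq> {..<deg U}" "contract U J = T" by blast
    have "deg T = card {i\<in>J. i < deg U}" using J deg_contract by metis
    also have "\<dots> \<le> card {..<deg U}" by (rule card_mono) auto
    finally show False using l by simp
  qed
  then show ?thesis by (simp add: pbinom_def)
qed

lemma part2:
  fixes S T :: "ptree option" and a b :: complex
  shows "(\<Sum>U\<in>{U\<in>PP. deg U \<le> deg S}.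
              of_nat (pbinom S U * pbinom U T) * a ^ (deg S - deg U) * (b - a) ^ (deg U - deg T))
             = of_nat (pbinom S T) * b ^ (deg S - deg T)"
proof -
  define n where "n = deg S"
  define m where "m = deg T"
  define Y where "Y = {U\<in>PP. deg U \<le> n}"
  define f where "f U = of_nat (pbinom S U * pbinom U T) * a ^ (n - deg U) * (b - a) ^ (deg U - m)" for U
  define g where "g j = (\<Sum>U\<in>{U\<in>Y. deg U = j}. f U)" for j
  have fY: "finite Y" unfolding Y_def by (rule finite_PP_le)
  have s1: "(\<Sum>U\<in>Y. f U) = (\<Sum>j\<le>n. g j)"
    unfolding g_def by (rule sum.group[symmetric, OF fY]) (auto simp: Y_def)
  have g_eq: "g j = of_nat (\<Sum>U\<in>{U\<in>PP. deg U = j}. pbinom S U * pbinom U T) * a ^ (n - j) * (b - a) ^ (j - m)"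
    if "j \<le> n" for j
  proof -
    have "{U\<in>Y. deg U = j} = {U\<in>PP. deg U = j}" using that by (auto simp: Y_def)
    then have "g j = (\<Sum>U\<in>{U\<in>PP. deg U = j}. of_nat (pbinom S U * pbinom U T) * (a ^ (n - j) * (b - a) ^ (j - m)))"
      unfolding g_def f_def by (auto simp: mult.assoc intro!: sum.cong)
    also have "\<dots> = of_nat (\<Sum>U\<in>{U\<in>PP. deg U = j}. pbinom S U * pbinom U T) * (a ^ (n - j) * (b - a) ^ (j - m))"
      by (simp add: sum_distrib_right of_nat_sum)
    finally show ?thesis by (simp add: mult.assoc)
  qed
  have g0: "g j = 0" if "j \<le> n" "j < m" for j
  proof -
    have "(\<Sum>U\<in>{U\<in>PP. deg U = j}. pbinom S U * pbinom U T) = 0"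
      using that pbinom_zero[of _ T] by (auto simp: m_def intro!: sum.neutral)
    then show ?thesis using g_eq[OF that(1)] by simp
  qed
  show ?thesis
  proof (cases "m \<le> n")
    case False
    then have "(\<Sum>j\<le>n. g j) = 0" using g0 by (auto intro!: sum.neutral)
    moreover have "pbinom S T = 0" using False pbinom_zero[of S T] by (simp add: n_def m_def)
    ultimately show ?thesis using s1 unfolding f_def Y_def n_def m_def by simp
  next
    case True
    define N where "N = n - m"
    have gk: "g (m + k) = of_nat (pbinom S T) * (of_nat (N choose k) * (b - a) ^ k * a ^ (N - k))"
      if "k \<le> N" for k
    proof -
      have "g (m + k) = of_nat (pbinom S T * (N choose k)) * a ^ (n - (m + k)) * (b - a) ^ (m + k - m)"
        using g_eq[of "m + k"] that part1[of S T k] True by (simp add: N_def n_def m_def)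
      also have "n - (m + k) = N - k" by (simp add: N_def)
      finally show ?thesis by (simp add: algebra_simps)
    qed
    have "(\<Sum>j\<le>n. g j) = (\<Sum>j\<in>(\<lambda>k. m + k) ` {..N}. g j)"
    proof (rule sum.mono_neutral_right)
      show "(\<lambda>k. m + k) ` {..N} \<subseteq> {..n}" using True by (auto simp: N_def)
      show "\<forall>i\<in>{..n} - (\<lambda>k. m + k) ` {..N}. g i = 0"
      proof
        fix i assume i: "i \<in> {..n} - (\<lambda>k. m + k) ` {..N}"
        have "i < m"
        proof (rule ccontr)
          assume "\<not> i < m"
          then have "i = m + (i - m)" "i - m \<le> N" using i by (auto simp: N_def)
          then show False using i by blast
        qed
        then show "g i = 0" using g0 i by auto
      qed
    qed simp
    also have "\<dots> = (\<Sum>k\<le>N. g (m + k))" by (simp add: sum.reindex)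
    also have "\<dots> = (\<Sum>k\<le>N. of_nat (pbinom S T) * (of_nat (N choose k) * (b - a) ^ k * a ^ (N - k)))"
      by (rule sum.cong) (simp_all add: gk)
    also have "\<dots> = of_nat (pbinom S T) * (\<Sum>k\<le>N. of_nat (N choose k) * (b - a) ^ k * a ^ (N - k))"
      by (simp add: sum_distrib_left)
    also have "\<dots> = of_nat (pbinom S T) * ((b - a) + a) ^ N"
      by (simp only: binomial_ring)
    also have "\<dots> = of_nat (pbinom S T) * b ^ N" by simp
    finally show ?thesis using s1 unfolding f_def Y_def N_def n_def m_def by simp
  qed
qed

theorem mainTheorem3:
  fixes S T :: "ptree option"
  assumes "S \<in> PP" and "T \<in> PP"
  shows "(\<forall>k. deg T + k \<le> deg S \<longrightarrow>
           (\<Sum>U\<in>{U\<in>PP. deg U = deg T + k}. pbinom S U * pbinom U T)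
             = pbinom S T * (deg S - deg T choose k))
       \<and> (\<forall>a b :: complex.
           (\<Sum>U\<in>{U\<in>PP. deg U \<le> deg S}.
              of_nat (pbinom S U * pbinom U T) * a ^ (deg S - deg U) * (b - a) ^ (deg U - deg T))
             = of_nat (pbinom S T) * b ^ (deg S - deg T))"
  using part1 part2 by blast

end
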